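(* Consider a collaborative learning problem with $k$ agents, strategy space $\Theta\subseteq\mathbb{R}_+^k$, utility functions $u_i:\Theta\to\mathbb{R}$ and thresholds $\mu_i$. For each $i$ let $\vartheta_i\ge0$ be such that $u_i(\vartheta_i,\mathbf{0}_{-i})\ge\mu_i$. If the utilities $\{u_i\}$ are well-behaved over $\prod_{i=1}^k[0,\vartheta_i]\subseteq\Theta$, then a stable equilibrium exists.
   Context: Standing assumptions: each $u_i$ is non-decreasing in every coordinate. $(x,{\boldsymbol\theta}_{-i})$ denotes ${\boldsymbol\theta}$ with $i$-th entry replaced by $x$. ${\boldsymbol\theta}$ is feasible if $u_i({\boldsymbol\theta})\ge\mu_i$ for all $i$. A feasible ${\boldsymbol\theta}$ is a stable equilibrium over $\Theta$ if for no $i$ is there $(\theta_i',{\boldsymbol\theta}_{-i})\in\Theta$ with $\theta_i'<\theta_i$ and $u_i(\theta_i',{\boldsymbol\theta}_{-i})\ge\mu_i$. Utilities are well-behaved over $\prod_{i=1}^k[0,C_i]\subseteq\Theta$ if for each agent $i$ there are constants $c_1^i\ge0$, $c_2^i>0$ such that for all ${\boldsymbol\theta}$ in this box: $\partial u_i({\boldsymbol\theta})/\partial\theta_i\ge c_2^i$, and for all $j\ne i$, $0\le\partial u_i({\boldsymbol\theta})/\partial\theta_j\le c_1^i$. *)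

theory Defs
  imports "HOL-Analysis.Analysis"
begin

text \<open>Agents are indexed by a finite type 'n (k = CARD('n)); a strategy profile is a
  function 'n \<Rightarrow> real. \<open>\<theta>(i := x)\<close> is \<open>(x, \<theta>_{-i})\<close>.\<close>

definition feasible :: "('n \<Rightarrow> ('n \<Rightarrow> real) \<Rightarrow> real) \<Rightarrow> ('n \<Rightarrow> real) \<Rightarrow> ('n \<Rightarrow> real) \<Rightarrow> bool" where
  "feasible u \<mu> \<theta> \<longleftrightarrow> (\<forall>i. u i \<theta> \<ge> \<mu> i)"

definition stable_equilibrium ::
  "('n \<Rightarrow> real) set \<Rightarrow> ('n \<Rightarrow> ('n \<Rightarrow> real) \<Rightarrow> real) \<Rightarrow> ('n \<Rightarrow> real) \<Rightarrow> ('n \<Rightarrow> real) \<Rightarrow> bool" where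
  "stable_equilibrium \<Theta> u \<mu> \<theta> \<longleftrightarrow> feasible u \<mu> \<theta> \<and>
     \<not> (\<exists>i x. \<theta>(i := x) \<in> \<Theta> \<and> x < \<theta> i \<and> u i (\<theta>(i := x)) \<ge> \<mu> i)"

definition box_set :: "('n \<Rightarrow> real) \<Rightarrow> ('n \<Rightarrow> real) set" where
  "box_set C = {\<theta>. \<forall>j. 0 \<le> \<theta> j \<and> \<theta> j \<le> C j}"

text \<open>Partial derivative of \<open>f\<close> in coordinate \<open>j\<close> at \<open>\<theta>\<close>, taken within the box
  (one-sided at the faces of the box).\<close>
definition has_partial_within ::
  "(('n \<Rightarrow> real) \<Rightarrow> real) \<Rightarrow> 'n \<Rightarrow> ('n \<Rightarrow> real) \<Rightarrow> real \<Rightarrow> ('n \<Rightarrow> real) \<Rightarrow> bool" where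
  "has_partial_within f j \<theta> D C \<longleftrightarrow>
     ((\<lambda>t. f (\<theta>(j := t))) has_real_derivative D) (at (\<theta> j) within {0..C j})"

definition well_behaved :: "('n \<Rightarrow> ('n \<Rightarrow> real) \<Rightarrow> real) \<Rightarrow> ('n \<Rightarrow> real) \<Rightarrow> bool" where
  "well_behaved u C \<longleftrightarrow> (\<forall>i. \<exists>c1 c2. c1 \<ge> 0 \<and> c2 > 0 \<and>
     (\<forall>\<theta>\<in>box_set C.
        (\<exists>D. has_partial_within (u i) i \<theta> D C \<and> D \<ge> c2) \<and>
        (\<forall>j. j \<noteq> i \<longrightarrow> (\<exists>D. has_partial_within (u i) j \<theta> D C \<and> 0 \<le> D \<and> D \<le> c1))))"

end

theory Submission
  imports Defs
begin

lemma deriv_mono_aux: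
  fixes F :: "real \<Rightarrow> real"
  assumes d: "\<forall>t\<in>{a..b}. \<exists>D. (F has_real_derivative D) (at t within {a..b}) \<and> 0 \<le> D"
    and "a \<le> x" "x \<le> y" "y \<le> b"
  shows "F x \<le> F y"
proof -
  have "continuous_on {a..b} F"
    unfolding continuous_on_eq_continuous_within using d DERIV_continuous by blast
  then have cont: "continuous_on {x..y} F"
    by (rule continuous_on_subset) (use assms in auto)
  show ?thesis
  proof (rule DERIV_nonneg_imp_increasing_open[OF assms(3) _ cont])
    fix t assume "x < t" "t < y"
    then have "a < t" "t < b" using assms by auto
    then have "at t within {a..b} = at t" by (rule at_within_Icc_at)
    moreover obtain D where "(F has_real_derivative D) (at t within {a..b})" "0 \<le> D"
      using d \<open>a<t\<close> \<open>t<b\<close> by fastforce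
    ultimately show "\<exists>D. DERIV F t :> D \<and> 0 \<le> D" by auto
  qed
qed

lemma br_aux:
  fixes f :: "real \<Rightarrow> real"
  assumes cont: "continuous_on {0..c} f" and c: "0 \<le> c" and fc: "\<mu> \<le> f c"
  defines "b \<equiv> Inf {x\<in>{0..c}. \<mu> \<le> f x}"
  shows "b \<in> {0..c}" "\<mu> \<le> f b" "\<And>x. x \<in> {0..c} \<Longrightarrow> \<mu> \<le> f x \<Longrightarrow> b \<le> x"
proof -
  let ?S = "{x\<in>{0..c}. \<mu> \<le> f x}"
  have eq: "?S = {0..c} \<inter> f -` {\<mu>..}" by auto
  have cl: "closed ?S" unfolding eq
    by (rule continuous_closed_preimage[OF cont]) auto
  have ne: "?S \<noteq> {}" using c fc by auto
  have bdd: "bdd_below ?S" by (rule bdd_belowI[of _ 0]) auto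
  have "b \<in> ?S" unfolding b_def by (rule closed_contains_Inf[OF ne bdd cl])
  then show "b \<in> {0..c}" "\<mu> \<le> f b" by auto
  show "\<And>x. x \<in> {0..c} \<Longrightarrow> \<mu> \<le> f x \<Longrightarrow> b \<le> x"
    unfolding b_def by (rule cInf_lower) (use bdd in auto)
qed

theorem theorem2:
  fixes \<Theta> :: "('n::finite \<Rightarrow> real) set"
    and u :: "'n \<Rightarrow> ('n \<Rightarrow> real) \<Rightarrow> real"
    and \<mu> :: "'n \<Rightarrow> real"
    and C :: "'n \<Rightarrow> real"
  assumes nonneg: "\<Theta> \<subseteq> {\<theta>. \<forall>i. 0 \<le> \<theta> i}"
    and mono: "\<And>i \<theta> \<theta>'. \<theta> \<in> \<Theta> \<Longrightarrow> \<theta>' \<in> \<Theta> \<Longrightarrow> (\<forall>j. \<theta> j \<le> \<theta>' j) \<Longrightarrow> u i \<theta> \<le> u i \<theta>'"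
    and vt_nonneg: "\<And>i. 0 \<le> C i"
    and vt_ok: "\<And>i. u i ((\<lambda>_. 0)(i := C i)) \<ge> \<mu> i"
    and box_sub: "box_set C \<subseteq> \<Theta>"
    and wb: "well_behaved u C"
  shows "\<exists>\<theta>\<in>\<Theta>. stable_equilibrium \<Theta> u \<mu> \<theta>"
proof -
  have "\<forall>i. \<exists>c1 c2. c1 \<ge> 0 \<and> c2 > 0 \<and>
     (\<forall>\<theta>\<in>box_set C.
        (\<exists>D. has_partial_within (u i) i \<theta> D C \<and> D \<ge> c2) \<and>
        (\<forall>j. j \<noteq> i \<longrightarrow> (\<exists>D. has_partial_within (u i) j \<theta> D C \<and> 0 \<le> D \<and> D \<le> c1)))"
    using wb unfolding well_behaved_def by blast
  then obtain c1 c2 :: "'n \<Rightarrow> real" where c1: "\<And>i. c1 i \<ge> 0" and c2: "\<And>i. c2 i > 0"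
    and own: "\<And>i \<theta>. \<theta> \<in> box_set C \<Longrightarrow> \<exists>D. has_partial_within (u i) i \<theta> D C \<and> D \<ge> c2 i"
    and oth: "\<And>i j \<theta>. \<theta> \<in> box_set C \<Longrightarrow> j \<noteq> i \<Longrightarrow> \<exists>D. has_partial_within (u i) j \<theta> D C \<and> 0 \<le> D \<and> D \<le> c1 i"
    by metis
  have boxupd: "\<theta>(j := x) \<in> box_set C" if "\<theta> \<in> box_set C" "0 \<le> x" "x \<le> C j" for \<theta> j x
    using that unfolding box_set_def by auto
  have boxin: "\<theta> \<in> box_set C \<longleftrightarrow> (\<forall>j. 0 \<le> \<theta> j \<and> \<theta> j \<le> C j)" for \<theta>
    unfolding box_set_def by auto
  have pd: "((\<lambda>s. u i (\<theta>(j := s))) has_real_derivative D) (at t within {0..C j})"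
    if "has_partial_within (u i) j (\<theta>(j := t)) D C" for i j \<theta> t D
    using that unfolding has_partial_within_def by simp
  have F1: "u i (\<theta>(i := x)) + c2 i * (y - x) \<le> u i (\<theta>(i := y))"
    if th: "\<theta> \<in> box_set C" and xy: "0 \<le> x" "x \<le> y" "y \<le> C i" for \<theta> i x y
  proof -
    have "(\<lambda>s. u i (\<theta>(i := s)) - c2 i * s) x \<le> (\<lambda>s. u i (\<theta>(i := s)) - c2 i * s) y"
    proof (rule deriv_mono_aux[OF _ xy])
      show "\<forall>t\<in>{0..C i}. \<exists>D. ((\<lambda>s. u i (\<theta>(i := s)) - c2 i * s) has_real_derivative D) (at t within {0..C i}) \<and> 0 \<le> D"
      proof
        fix t assume "t \<in> {0..C i}"
        then have "\<theta>(i := t) \<in> box_set C" using boxupd th by auto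
        then obtain D where D: "has_partial_within (u i) i (\<theta>(i := t)) D C" "D \<ge> c2 i"
          using own by blast
        have "((\<lambda>s. u i (\<theta>(i := s)) - c2 i * s) has_real_derivative (D - c2 i * 1)) (at t within {0..C i})"
          by (intro DERIV_diff pd[OF D(1)] DERIV_cmult DERIV_ident)
        then show "\<exists>D. ((\<lambda>s. u i (\<theta>(i := s)) - c2 i * s) has_real_derivative D) (at t within {0..C i}) \<and> 0 \<le> D"
          using D(2) by force
      qed
    qed
    then show ?thesis by (simp add: algebra_simps)
  qed
  have F2: "u i (\<theta>(j := y)) \<le> u i (\<theta>(j := x)) + c1 i * (y - x)"
    if th: "\<theta> \<in> box_set C" and ij: "j \<noteq> i" and xy: "0 \<le> x" "x \<le> y" "y \<le> C j" for \<theta> i j x y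
  proof -
    have "(\<lambda>s. c1 i * s - u i (\<theta>(j := s))) x \<le> (\<lambda>s. c1 i * s - u i (\<theta>(j := s))) y"
    proof (rule deriv_mono_aux[OF _ xy])
      show "\<forall>t\<in>{0..C j}. \<exists>D. ((\<lambda>s. c1 i * s - u i (\<theta>(j := s))) has_real_derivative D) (at t within {0..C j}) \<and> 0 \<le> D"
      proof
        fix t assume "t \<in> {0..C j}"
        then have "\<theta>(j := t) \<in> box_set C" using boxupd th by auto
        then obtain D where D: "has_partial_within (u i) j (\<theta>(j := t)) D C" "D \<le> c1 i"
          using oth ij by blast
        have "((\<lambda>s. c1 i * s - u i (\<theta>(j := s))) has_real_derivative (c1 i * 1 - D)) (at t within {0..C j})"
          by (intro DERIV_diff pd[OF D(1)] DERIV_cmult DERIV_ident)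
        then show "\<exists>D. ((\<lambda>s. c1 i * s - u i (\<theta>(j := s))) has_real_derivative D) (at t within {0..C j}) \<and> 0 \<le> D"
          using D(2) by force
      qed
    qed
    then show ?thesis by (simp add: algebra_simps)
  qed
  have F2': "u i (\<theta>(j := y)) \<le> u i (\<theta>(j := x)) + c1 i * \<bar>y - x\<bar>"
    if th: "\<theta> \<in> box_set C" and ij: "j \<noteq> i" and xy: "0 \<le> x" "x \<le> C j" "0 \<le> y" "y \<le> C j" for \<theta> i j x y
  proof (cases "x \<le> y")
    case True
    then show ?thesis using F2[OF th ij xy(1) True xy(4)] by simp
  next
    case False
    have "u i (\<theta>(j := y)) \<le> u i (\<theta>(j := x))"
      by (rule mono) (use box_sub boxupd th xy False in auto)
    then show ?thesis using c1[of i] by (smt (verit) mult_nonneg_nonneg abs_ge_zero)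
  qed
  have F3: "\<And>\<eta>. \<theta> \<in> box_set C \<Longrightarrow> \<eta> \<in> box_set C \<Longrightarrow> (\<forall>j. j \<notin> J \<longrightarrow> \<eta> j = \<theta> j) \<Longrightarrow>
      u i \<eta> \<le> u i \<theta> + c1 i * (\<Sum>j\<in>J. \<bar>\<eta> j - \<theta> j\<bar>)"
    if "finite J" "i \<notin> J" for J i \<theta>
    using that
  proof (induction J rule: finite_induct)
    case empty
    then have "\<eta> = \<theta>" by auto
    then show ?case by simp
  next
    case (insert j J)
    define \<eta>' where "\<eta>' = \<eta>(j := \<theta> j)"
    have e': "\<eta>' \<in> box_set C" unfolding \<eta>'_def
      by (rule boxupd) (use insert.prems in \<open>auto simp: boxin\<close>)
    have agree: "\<forall>k. k \<notin> J \<longrightarrow> \<eta>' k = \<theta> k"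
      using insert.prems unfolding \<eta>'_def by auto
    have IH: "u i \<eta>' \<le> u i \<theta> + c1 i * (\<Sum>j\<in>J. \<bar>\<eta>' j - \<theta> j\<bar>)"
      using insert.IH[OF insert.prems(1) e' agree] insert.prems by auto
    have s: "(\<Sum>j\<in>J. \<bar>\<eta>' j - \<theta> j\<bar>) = (\<Sum>j\<in>J. \<bar>\<eta> j - \<theta> j\<bar>)"
      by (rule sum.cong) (use insert.hyps in \<open>auto simp: \<eta>'_def\<close>)
    have ji: "j \<noteq> i" using insert.prems by auto
    have "u i (\<eta>'(j := \<eta> j)) \<le> u i (\<eta>'(j := \<theta> j)) + c1 i * \<bar>\<eta> j - \<theta> j\<bar>"
      by (rule F2'[OF e' ji]) (use insert.prems in \<open>auto simp: boxin\<close>)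
    moreover have "\<eta>'(j := \<eta> j) = \<eta>" "\<eta>'(j := \<theta> j) = \<eta>'" unfolding \<eta>'_def by auto
    ultimately have "u i \<eta> \<le> u i \<eta>' + c1 i * \<bar>\<eta> j - \<theta> j\<bar>" by simp
    then show ?case using IH s insert.hyps by (simp add: algebra_simps)
  qed
  define BR where "BR i \<theta> = Inf {x\<in>{0..C i}. \<mu> i \<le> u i (\<theta>(i := x))}" for i \<theta>
  have BR: "BR i \<theta> \<in> {0..C i}" "\<mu> i \<le> u i (\<theta>(i := BR i \<theta>))"
    "\<And>x. x \<in> {0..C i} \<Longrightarrow> \<mu> i \<le> u i (\<theta>(i := x)) \<Longrightarrow> BR i \<theta> \<le> x"
    if th: "\<theta> \<in> box_set C" for i \<theta>
  proof -
    have "continuous_on {0..C i} (\<lambda>x. u i (\<theta>(i := x)))"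
      unfolding continuous_on_eq_continuous_within
    proof
      fix t assume "t \<in> {0..C i}"
      then have "\<theta>(i := t) \<in> box_set C" using boxupd th by auto
      then obtain D where D: "has_partial_within (u i) i (\<theta>(i := t)) D C"
        using own by blast
      show "continuous (at t within {0..C i}) (\<lambda>x. u i (\<theta>(i := x)))"
        by (rule DERIV_continuous[OF pd[OF D]])
    qed
    moreover have "\<mu> i \<le> u i (\<theta>(i := C i))"
    proof -
      have "u i ((\<lambda>_. 0)(i := C i)) \<le> u i (\<theta>(i := C i))"
        by (rule mono) (use box_sub boxupd th vt_nonneg in \<open>auto simp: boxin\<close>)
      then show ?thesis using vt_ok[of i] by linarith
    qed
    ultimately show "BR i \<theta> \<in> {0..C i}" "\<mu> i \<le> u i (\<theta>(i := BR i \<theta>))"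
      "\<And>x. x \<in> {0..C i} \<Longrightarrow> \<mu> i \<le> u i (\<theta>(i := x)) \<Longrightarrow> BR i \<theta> \<le> x"
      using br_aux[of "C i" "\<lambda>x. u i (\<theta>(i := x))" "\<mu> i"] vt_nonneg[of i] unfolding BR_def by auto
  qed
  have L: "BR i \<theta>' \<le> BR i \<theta> + c1 i / c2 i * (\<Sum>j\<in>-{i}. \<bar>\<theta>' j - \<theta> j\<bar>)"
    if th: "\<theta> \<in> box_set C" and th': "\<theta>' \<in> box_set C" for i \<theta> \<theta>'
  proof -
    define b where "b = BR i \<theta>"
    define \<delta> where "\<delta> = (\<Sum>j\<in>-{i}. \<bar>\<theta>' j - \<theta> j\<bar>)"
    define t where "t = b + c1 i / c2 i * \<delta>"
    have \<delta>0: "0 \<le> \<delta>" unfolding \<delta>_def by (rule sum_nonneg) auto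
    have b0: "0 \<le> b" "b \<le> C i" using BR(1)[OF th] unfolding b_def by auto
    have bt: "b \<le> t" unfolding t_def using \<delta>0 c1[of i] c2[of i] by simp
    show ?thesis
    proof (cases "C i \<le> t")
      case True
      have "BR i \<theta>' \<le> C i" using BR(1)[OF th', of i] by auto
      then show ?thesis using True unfolding t_def b_def \<delta>_def by linarith
    next
      case False
      have e1: "\<theta>'(i := t) \<in> box_set C" by (rule boxupd[OF th']) (use b0 bt False in auto)
      have e2: "\<theta>(i := t) \<in> box_set C" by (rule boxupd[OF th]) (use b0 bt False in auto)
      have "u i (\<theta>(i := t)) \<le> u i (\<theta>'(i := t)) + c1 i * (\<Sum>j\<in>-{i}. \<bar>(\<theta>(i := t)) j - (\<theta>'(i := t)) j\<bar>)"
        by (rule F3[OF _ _ e1 e2]) auto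
      also have "(\<Sum>j\<in>-{i}. \<bar>(\<theta>(i := t)) j - (\<theta>'(i := t)) j\<bar>) = \<delta>"
        unfolding \<delta>_def by (rule sum.cong) auto
      finally have A: "u i (\<theta>(i := t)) \<le> u i (\<theta>'(i := t)) + c1 i * \<delta>" .
      have B: "u i (\<theta>(i := b)) + c2 i * (t - b) \<le> u i (\<theta>(i := t))"
        by (rule F1[OF th]) (use b0 bt False in auto)
      have "c2 i * (t - b) = c1 i * \<delta>" unfolding t_def using c2[of i] by simp
      then have "\<mu> i \<le> u i (\<theta>'(i := t))" using A B BR(2)[OF th, of i] unfolding b_def by linarith
      moreover have "t \<in> {0..C i}" using b0 bt False by auto
      ultimately have "BR i \<theta>' \<le> t" using BR(3)[OF th'] by blast
      then show ?thesis unfolding t_def b_def \<delta>_def .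
    qed
  qed
  define K where "K i = c1 i / c2 i * real CARD('n)" for i
  have K0: "0 \<le> K i" for i unfolding K_def using c1[of i] c2[of i] by simp
  have L2: "\<bar>BR i \<theta>' - BR i \<theta>\<bar> \<le> c1 i / c2 i * (\<Sum>j\<in>UNIV. \<bar>\<theta>' j - \<theta> j\<bar>)"
    if th: "\<theta> \<in> box_set C" and th': "\<theta>' \<in> box_set C" for i \<theta> \<theta>'
  proof -
    have q: "0 \<le> c1 i / c2 i" using c1[of i] c2[of i] by simp
    have s: "(\<Sum>j\<in>-{i}. \<bar>\<theta>' j - \<theta> j\<bar>) \<le> (\<Sum>j\<in>UNIV. \<bar>\<theta>' j - \<theta> j\<bar>)"
      by (rule sum_mono2) auto
    have s': "(\<Sum>j\<in>-{i}. \<bar>\<theta> j - \<theta>' j\<bar>) = (\<Sum>j\<in>-{i}. \<bar>\<theta>' j - \<theta> j\<bar>)"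
      by (rule sum.cong) auto
    have "c1 i / c2 i * (\<Sum>j\<in>-{i}. \<bar>\<theta>' j - \<theta> j\<bar>) \<le> c1 i / c2 i * (\<Sum>j\<in>UNIV. \<bar>\<theta>' j - \<theta> j\<bar>)"
      using mult_left_mono[OF s q] .
    moreover have "BR i \<theta> \<le> BR i \<theta>' + c1 i / c2 i * (\<Sum>j\<in>-{i}. \<bar>\<theta>' j - \<theta> j\<bar>)"
      using L[OF th' th, of i] s' by simp
    ultimately show ?thesis using L[OF th th', of i] by (simp add: abs_le_iff)
  qed
  define S where "S = cbox (0::real^'n) (\<chi> i. C i)"
  have S_iff: "v \<in> S \<longleftrightarrow> vec_nth v \<in> box_set C" for v
    unfolding S_def mem_box_cart boxin by simp
  define g where "g v = (\<chi> i. BR i (vec_nth v))" for v :: "real^'n"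
  have "continuous_on S g" unfolding g_def
  proof (intro continuous_on_vec_lambda)
    fix i
    have "(K i)-lipschitz_on S (\<lambda>v. BR i (vec_nth v))"
    proof (rule lipschitz_onI[OF _ K0])
      fix v w assume v: "v \<in> S" and w: "w \<in> S"
      have "dist (BR i (vec_nth v)) (BR i (vec_nth w)) \<le> c1 i / c2 i * (\<Sum>j\<in>UNIV. \<bar>v $ j - w $ j\<bar>)"
        using L2[of "vec_nth w" "vec_nth v" i] v w unfolding S_iff dist_real_def by auto
      moreover have B: "(\<Sum>j\<in>UNIV. \<bar>v $ j - w $ j\<bar>) \<le> (\<Sum>j\<in>(UNIV::'n set). dist v w)"
      proof (rule sum_mono)
        fix j
        show "\<bar>v $ j - w $ j\<bar> \<le> dist v w"
          using component_le_norm_cart[of "v - w" j] by (simp add: dist_norm)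
      qed
      moreover have "c1 i / c2 i * (\<Sum>j\<in>(UNIV::'n set). dist v w) = K i * dist v w"
        unfolding K_def by simp
      moreover have "0 \<le> c1 i / c2 i" using c1[of i] c2[of i] by simp
      ultimately show "dist (BR i (vec_nth v)) (BR i (vec_nth w)) \<le> K i * dist v w"
        using mult_left_mono[OF B] by (smt (verit))
    qed
    then show "continuous_on S (\<lambda>v. BR i (vec_nth v))" by (rule lipschitz_on_continuous_on)
  qed
  moreover have "compact S" "convex S" unfolding S_def by auto
  moreover have "S \<noteq> {}"
  proof -
    have "(0::real^'n) \<in> S" unfolding S_def mem_box_cart using vt_nonneg by auto
    then show ?thesis by blast
  qed
  moreover have "g \<in> S \<rightarrow> S"
  proof
    fix v assume "v \<in> S"
    then have "vec_nth v \<in> box_set C" by (simp add: S_iff)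
    then show "g v \<in> S" unfolding S_iff g_def using BR(1) by (auto simp: boxin)
  qed
  ultimately obtain v where v: "v \<in> S" "g v = v" using brouwer by metis
  define \<theta> where "\<theta> = vec_nth v"
  have th: "\<theta> \<in> box_set C" using v(1) by (simp add: S_iff \<theta>_def)
  have fixp: "BR i \<theta> = \<theta> i" for i
    using arg_cong[OF v(2), of "\<lambda>w. w $ i"] unfolding g_def \<theta>_def by simp
  have feas: "feasible u \<mu> \<theta>"
    unfolding feasible_def
  proof
    fix i show "\<mu> i \<le> u i \<theta>" using BR(2)[OF th, of i] by (simp add: fixp)
  qed
  have "\<not> (\<exists>i x. \<theta>(i := x) \<in> \<Theta> \<and> x < \<theta> i \<and> u i (\<theta>(i := x)) \<ge> \<mu> i)"
  proof
    assume "\<exists>i x. \<theta>(i := x) \<in> \<Theta> \<and> x < \<theta> i \<and> u i (\<theta>(i := x)) \<ge> \<mu> i"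
    then obtain i x where x: "\<theta>(i := x) \<in> \<Theta>" "x < \<theta> i" "\<mu> i \<le> u i (\<theta>(i := x))" by blast
    have "\<forall>k. 0 \<le> (\<theta>(i := x)) k" using nonneg x(1) by blast
    then have "0 \<le> x" by (metis fun_upd_same)
    moreover have "x \<le> C i" using x(2) th unfolding boxin by (meson less_imp_le order_trans)
    ultimately have "BR i \<theta> \<le> x" using BR(3)[OF th, of x i] x(3) by auto
    then show False using x(2) fixp[of i] by simp
  qed
  then show ?thesis using feas th box_sub unfolding stable_equilibrium_def by blast
qed

end
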